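(* For every positive integer $k$, $$2^k-1\le a_k\le 2^{k+n_k}-2^{\mu_2(k)}.$$
   Context: For a positive integer $k$, $a_k$ denotes the smallest positive multiple of $k$ whose sum of binary (base $2$) digits equals $k$. $n_k=\lceil\log_2 k\rceil$ and $\mu_2(k)$ is the largest $\alpha\ge0$ with $2^\alpha\mid k$. *)

theory Defs
  imports "HOL-Computational_Algebra.Computational_Algebra"
begin

fun bin_digit_sum :: "nat \<Rightarrow> nat" where
  "bin_digit_sum n = (if n = 0 then 0 else n mod 2 + bin_digit_sum (n div 2))"

declare bin_digit_sum.simps[simp del]

definition a_seq :: "nat \<Rightarrow> nat" where
  "a_seq k = (LEAST m. 0 < m \<and> k dvd m \<and> bin_digit_sum m = k)"

definition n_seq :: "nat \<Rightarrow> nat" where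
  "n_seq k = nat \<lceil>log 2 (real k)\<rceil>"

definition mu2 :: "nat \<Rightarrow> nat" where
  "mu2 k = multiplicity (2::nat) k"

end

theory Submission imports Defs "HOL-Number_Theory.Number_Theory" begin

lemma bds_step: "bin_digit_sum n = n mod 2 + bin_digit_sum (n div 2)"
  by (cases "n = 0") (simp_all add: bin_digit_sum.simps[of n] bin_digit_sum.simps[of 0])

lemma bds_0[simp]: "bin_digit_sum 0 = 0"
  by (simp add: bin_digit_sum.simps)

lemma bds_lin: "a < 2 \<Longrightarrow> bin_digit_sum (a + 2 * b) = a + bin_digit_sum b"
  by (subst bds_step) simp

lemma bds_shift: "bin_digit_sum (2 ^ j * x) = bin_digit_sum x"
  by (induction j) (auto simp: bds_lin[of 0, simplified] mult.assoc)

lemma bds_add: "a < 2 ^ j \<Longrightarrow> bin_digit_sum (a + 2 ^ j * b) = bin_digit_sum a + bin_digit_sum b"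
proof (induction j arbitrary: a)
  case 0 then show ?case by simp
next
  case (Suc j)
  have eq: "a + 2 ^ Suc j * b = a mod 2 + 2 * (a div 2 + 2 ^ j * b)" by simp
  have "bin_digit_sum (a + 2 ^ Suc j * b) = a mod 2 + bin_digit_sum (a div 2 + 2 ^ j * b)"
    by (subst eq, rule bds_lin, simp)
  also have "\<dots> = a mod 2 + bin_digit_sum (a div 2) + bin_digit_sum b"
    using Suc by simp
  also have "\<dots> = bin_digit_sum a + bin_digit_sum b" by (simp add: bds_step[of a])
  finally show ?case .
qed

lemma aux_arith: "x = r + 2 * h \<Longrightarrow> r \<le> 1 \<Longrightarrow> h \<le> P - 1 \<Longrightarrow> (1::nat) \<le> P
   \<Longrightarrow> 2 * P - 1 - x = (1 - r) + 2 * (P - 1 - h)"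
  by linarith

lemma bds_compl: "x < 2 ^ s \<Longrightarrow> bin_digit_sum x + bin_digit_sum (2 ^ s - 1 - x) = s"
proof (induction s arbitrary: x)
  case 0 then show ?case by simp
next
  case (Suc s)
  have h: "x div 2 < 2 ^ s" using Suc.prems by simp
  have e: "2 ^ Suc s - 1 - x = (1 - x mod 2) + 2 * (2 ^ s - 1 - x div 2)"
    unfolding power_Suc
    by (rule aux_arith) (use h in auto)
  have "bin_digit_sum (2 ^ Suc s - 1 - x) = (1 - x mod 2) + bin_digit_sum (2 ^ s - 1 - x div 2)"
    by (subst e, rule bds_lin, simp)
  moreover have "x mod 2 < 2" by simp
  ultimately show ?case using Suc.IH[OF h] bds_step[of x] by linarith
qed

lemma bds_lower: "2 ^ bin_digit_sum m \<le> m + 1"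
proof (induction m rule: less_induct)
  case (less m)
  show ?case
  proof (cases "m = 0")
    case False
    have ih: "2 ^ bin_digit_sum (m div 2) \<le> m div 2 + 1" using less False by simp
    have m: "m = m mod 2 + 2 * (m div 2)" by simp
    show ?thesis
    proof (cases "m mod 2 = 0")
      case True
      then show ?thesis using ih bds_step[of m] by simp
    next
      case F: False
      then have "m mod 2 = 1" by simp
      then have "bin_digit_sum m = Suc (bin_digit_sum (m div 2))" using bds_step[of m] by simp
      then show ?thesis using ih m \<open>m mod 2 = 1\<close> by simp
    qed
  qed simp
qed

lemma n_seq_bounds:
  assumes "0 < k"
  shows "k \<le> 2 ^ n_seq k \<and> 2 ^ n_seq k < 2 * k"
proof -
  define c where "c = \<lceil>log 2 (real k)\<rceil>"
  have l0: "log 2 (real k) \<ge> 0" using assms by simp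
  hence c0: "c \<ge> 0" unfolding c_def by linarith
  have rc: "real (n_seq k) = real_of_int c" unfolding n_seq_def c_def[symmetric] using c0 by simp
  have p: "(2::real) ^ n_seq k = 2 powr real_of_int c"
    using powr_realpow[of 2 "n_seq k"] rc by simp
  have "real k = 2 powr (log 2 (real k))" using assms by simp
  also have "\<dots> \<le> 2 powr real_of_int c" unfolding c_def by (rule powr_mono) auto
  finally have a: "real k \<le> 2 ^ n_seq k" using p by simp
  have "2 powr real_of_int c < 2 powr (log 2 (real k) + 1)"
    unfolding c_def by (rule powr_less_mono) (linarith, simp)
  also have "\<dots> = 2 * real k" using assms by (simp add: powr_add)
  finally have b: "(2::real) ^ n_seq k < 2 * real k" using p by simp
  from a b show ?thesis
    by (metis of_nat_less_iff of_nat_le_iff of_nat_numeral of_nat_power of_nat_mult)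
qed

lemma construct:
  fixes q s e m :: nat
  assumes q0: "0 < q" and qe: "q \<le> 2 ^ e" and cm: "[2 ^ m = 2] (mod q)"
    and em: "e \<le> m" and ms: "m \<le> s"
  shows "\<exists>M. q dvd M \<and> bin_digit_sum M = s \<and> M < 2 ^ (s + e)"
proof -
  define y where "y = (2 ^ e * (2 ^ s - 1)) mod q"
  have yq: "y < q" unfolding y_def using q0 by simp
  hence ye: "y < 2 ^ e" using qe by simp
  define Z where "Z = 2 ^ (m - e) * y"
  have "Z < 2 ^ (m - e) * 2 ^ e" unfolding Z_def using ye by simp
  also have "\<dots> = 2 ^ m" using em by (simp add: power_add[symmetric])
  also have "\<dots> \<le> 2 ^ s" using ms by simp
  finally have Zs: "Z < 2 ^ s" .
  define W where "W = 2 ^ s - 1 - Z"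
  define M where "M = y + 2 ^ e * W"
  have bZ: "bin_digit_sum Z = bin_digit_sum y" unfolding Z_def by (rule bds_shift)
  have bZW: "bin_digit_sum Z + bin_digit_sum W = s" unfolding W_def by (rule bds_compl[OF Zs])
  have bM: "bin_digit_sum M = s" unfolding M_def using bds_add[OF ye, of W] bZ bZW by simp
  have W1: "W \<le> 2 ^ s - 1" unfolding W_def by simp
  have "M < 2 ^ e + 2 ^ e * W" unfolding M_def using ye by simp
  also have "\<dots> = 2 ^ e * (W + 1)" by simp
  also have "\<dots> \<le> 2 ^ e * 2 ^ s"
  proof -
    have "(1::nat) \<le> 2 ^ s" by simp
    hence "W + 1 \<le> 2 ^ s" using W1 by linarith
    thus ?thesis by (rule mult_le_mono2)
  qed
  finally have Mlt: "M < 2 ^ (s + e)" by (simp add: power_add mult.commute)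
  have ZW: "W + Z = 2 ^ s - 1" unfolding W_def using Zs by simp
  have eZ: "2 ^ e * Z = y * 2 ^ m" unfolding Z_def using em
    by (simp add: power_add[symmetric] mult.commute)
  have sum: "M + y * 2 ^ m = y + 2 ^ e * (2 ^ s - 1)"
    unfolding M_def eZ[symmetric] ZW[symmetric] by (simp add: algebra_simps)
  have c1: "[y + 2 ^ e * (2 ^ s - 1) = y + y] (mod q)"
    unfolding y_def by (simp add: cong_def mod_add_right_eq)
  have c2: "[y * 2 ^ m = y * 2] (mod q)" by (rule cong_mult[OF cong_refl cm])
  have "[M + y * 2 ^ m = 0 + y * 2 ^ m] (mod q)"
    using c1 c2 sum by (simp add: cong_def) (metis mult_2_right)
  hence "[int M + int (y * 2 ^ m) = int (y * 2 ^ m)] (mod int q)"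
    by (metis add_0 cong_int_iff of_nat_add)
  hence "[int M = 0] (mod int q)" by (rule cong_add_rcancel_0[THEN iffD1])
  hence "[M = 0] (mod q)" by (metis cong_int_iff of_nat_0)
  hence "q dvd M" by (simp add: cong_0_iff)
  thus ?thesis using bM Mlt by blast
qed

theorem mainTheorem3:
  fixes k :: nat
  assumes "0 < k"
  shows "2 ^ k - 1 \<le> a_seq k \<and> a_seq k \<le> 2 ^ (k + n_seq k) - 2 ^ mu2 k"
proof -
  define \<mu> where "\<mu> = mu2 k"
  define n where "n = n_seq k"
  obtain q where kq: "k = 2 ^ \<mu> * q" and qodd: "\<not> 2 dvd q"
    using multiplicity_decompose'[of k "2::nat"] assms unfolding \<mu>_def mu2_def by auto
  have q0: "0 < q" using kq assms by (cases "q = 0") auto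
  have nb: "k \<le> 2 ^ n" "2 ^ n < 2 * k" using n_seq_bounds[OF assms] unfolding n_def by auto
  have "2 ^ \<mu> \<le> k" using kq q0 by simp
  hence "(2::nat) ^ \<mu> \<le> 2 ^ n" using nb by linarith
  hence mun: "\<mu> \<le> n" by simp
  define e where "e = n - \<mu>"
  have pn: "(2::nat) ^ n = 2 ^ \<mu> * 2 ^ e" unfolding e_def using mun by (simp add: power_add[symmetric])
  have qe: "q \<le> 2 ^ e" using nb(1) kq pn by simp
  have qe2: "2 ^ e < 2 * q" using nb(2) kq pn by simp
  obtain m where cm: "[2 ^ m = 2] (mod q)" and em: "e \<le> m" and mk: "m \<le> k"
  proof (cases "q = 1")
    case True
    hence "e = 0" using qe2 by (cases e) auto
    thus ?thesis using that[of 0] True by simp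
  next
    case False
    hence q1: "q > 1" using q0 by simp
    define t where "t = totient q"
    have cop: "coprime 2 q" using qodd by simp
    have ct: "[2 ^ t = 1] (mod q)" unfolding t_def by (rule euler_theorem[OF cop])
    have tq: "t < q" unfolding t_def by (rule totient_less[OF q1])
    have t0: "t > 0" unfolding t_def using q0 by simp
    have "[2 ^ t - 1 = 0] (mod q)"
      using cong_diff_iff_cong_0_nat[of 1 "2 ^ t" q] ct by simp
    hence "q dvd 2 ^ t - 1" by (simp add: cong_0_iff)
    moreover have "2 ^ t - 1 > (0::nat)" using t0 one_less_power[of "2::nat" t] by simp
    ultimately have "q \<le> 2 ^ t - 1" by (simp add: dvd_imp_le)
    moreover have "(1::nat) \<le> 2 ^ t" by simp
    ultimately have "q < 2 ^ t" by linarith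
    hence "2 * q < 2 ^ (t + 1)" by simp
    hence "(2::nat) ^ e < 2 ^ (t + 1)" using qe2 by linarith
    hence em': "e \<le> t + 1" using power_less_imp_less_exp[of "2::nat" e "t+1"] by simp
    have cm': "[2 ^ (t + 1) = 2] (mod q)" using cong_mult[OF ct cong_refl[of 2]] by (simp add: mult.commute)
    have "t + 1 \<le> k" using tq kq q0
      by (metis Suc_eq_plus1 Suc_leI le_trans mult_le_mono1 mult_1 one_le_power one_le_numeral)
    then show ?thesis using that[OF cm' em'] by simp
  qed
  obtain M where M: "q dvd M" "bin_digit_sum M = k" "M < 2 ^ (k + e)"
    using construct[OF q0 qe cm em mk] by blast
  define A where "A = 2 ^ \<mu> * M"
  have PA: "0 < A \<and> k dvd A \<and> bin_digit_sum A = k"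
  proof -
    have "bin_digit_sum A = k" unfolding A_def using M(2) by (simp add: bds_shift)
    moreover have "k dvd A" unfolding A_def kq using M(1) by simp
    moreover have "A \<noteq> 0" using \<open>bin_digit_sum A = k\<close> assms bds_0 by (metis less_irrefl)
    ultimately show ?thesis by simp
  qed
  have le: "a_seq k \<le> A" unfolding a_seq_def by (rule Least_le) (rule PA)
  have "A \<le> 2 ^ \<mu> * (2 ^ (k + e) - 1)" unfolding A_def using M(3) by simp
  also have "\<dots> = 2 ^ (k + n) - 2 ^ \<mu>"
    unfolding e_def using mun by (simp add: right_diff_distrib' power_add[symmetric] algebra_simps)
  finally have up: "a_seq k \<le> 2 ^ (k + n) - 2 ^ \<mu>" using le by simp
  have "0 < a_seq k \<and> k dvd a_seq k \<and> bin_digit_sum (a_seq k) = k"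
    unfolding a_seq_def by (rule LeastI[of _ A]) (rule PA)
  hence "2 ^ k \<le> a_seq k + 1" using bds_lower[of "a_seq k"] by simp
  hence "2 ^ k - 1 \<le> a_seq k" by simp
  with up show ?thesis unfolding \<mu>_def n_def by simp
qed

end
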